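(* Let $A$ be an MV-algebra and $d$ a $(\odot,\vee)$-derivation on $A$. The following are equivalent: (1) $d$ is isotone and $d(1)\in\mathbf{B}(A)$; (2) $d(x\oplus y)=d(x)\oplus d(y)$ for all $x,y\in A$; (3) $d(x\odot y)=d(x)\odot d(y)$ for all $x,y\in A$.
   Context: An MV-algebra is an algebra $(A,\oplus,{}^*,0)$ of type $(2,1,0)$ satisfying: $x\oplus(y\oplus z)=(x\oplus y)\oplus z$, $x\oplus y=y\oplus x$, $x\oplus 0=x$, $x^{**}=x$, $x\oplus 0^*=0^*$, $(x^*\oplus y)^*\oplus y=(y^*\oplus x)^*\oplus x$. Put $1=0^*$ and $x\odot y=(x^*\oplus y^* )^*$. The natural order is $x\le y$ iff $x^*\oplus y=1$, with lattice operations $x\vee y=(x\odot y^* )\oplus y$, $x\wedge y=x\odot(x^*\oplus y)$. The Boolean center is $\mathbf{B}(A)=\{x\in A: x\oplus x=x\}$. A $(\odot,\vee)$-derivation on $A$ is a map $d:A\to A$ with $d(x\odot y)=(d(x)\odot y)\vee(x\odot d(y))$ for all $x,y\in A$; it is isotone if $x\le y$ implies $d(x)\le d(y)$. *)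

theory Defs
  imports Main
begin

locale mv_algebra =
  fixes oplus :: "'a \<Rightarrow> 'a \<Rightarrow> 'a" (infixl "\<oplus>" 65)
    and neg :: "'a \<Rightarrow> 'a"
    and zero :: 'a
  assumes assoc: "x \<oplus> (y \<oplus> z) = (x \<oplus> y) \<oplus> z"
    and comm: "x \<oplus> y = y \<oplus> x"
    and zero_neutral: "x \<oplus> zero = x"
    and neg_neg: "neg (neg x) = x"
    and one_absorb: "x \<oplus> neg zero = neg zero"
    and lukasiewicz: "neg (neg x \<oplus> y) \<oplus> y = neg (neg y \<oplus> x) \<oplus> x"

definition mv_one :: "('a \<Rightarrow> 'a) \<Rightarrow> 'a \<Rightarrow> 'a" where
  "mv_one neg zero = neg zero"

definition mv_odot :: "('a \<Rightarrow> 'a \<Rightarrow> 'a) \<Rightarrow> ('a \<Rightarrow> 'a) \<Rightarrow> 'a \<Rightarrow> 'a \<Rightarrow> 'a" where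
  "mv_odot oplus neg x y = neg (oplus (neg x) (neg y))"

definition mv_le :: "('a \<Rightarrow> 'a \<Rightarrow> 'a) \<Rightarrow> ('a \<Rightarrow> 'a) \<Rightarrow> 'a \<Rightarrow> 'a \<Rightarrow> 'a \<Rightarrow> bool" where
  "mv_le oplus neg zero x y \<longleftrightarrow> oplus (neg x) y = neg zero"

definition mv_sup :: "('a \<Rightarrow> 'a \<Rightarrow> 'a) \<Rightarrow> ('a \<Rightarrow> 'a) \<Rightarrow> 'a \<Rightarrow> 'a \<Rightarrow> 'a" where
  "mv_sup oplus neg x y = oplus (mv_odot oplus neg x (neg y)) y"

definition mv_inf :: "('a \<Rightarrow> 'a \<Rightarrow> 'a) \<Rightarrow> ('a \<Rightarrow> 'a) \<Rightarrow> 'a \<Rightarrow> 'a \<Rightarrow> 'a" where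
  "mv_inf oplus neg x y = mv_odot oplus neg x (oplus (neg x) y)"

definition boolean_center :: "('a \<Rightarrow> 'a \<Rightarrow> 'a) \<Rightarrow> 'a set" where
  "boolean_center oplus = {x. oplus x x = x}"

definition odot_sup_derivation :: "('a \<Rightarrow> 'a \<Rightarrow> 'a) \<Rightarrow> ('a \<Rightarrow> 'a) \<Rightarrow> ('a \<Rightarrow> 'a) \<Rightarrow> bool" where
  "odot_sup_derivation oplus neg d \<longleftrightarrow>
     (\<forall>x y. d (mv_odot oplus neg x y) =
        mv_sup oplus neg (mv_odot oplus neg (d x) y) (mv_odot oplus neg x (d y)))"

definition mv_isotone :: "('a \<Rightarrow> 'a \<Rightarrow> 'a) \<Rightarrow> ('a \<Rightarrow> 'a) \<Rightarrow> 'a \<Rightarrow> ('a \<Rightarrow> 'a) \<Rightarrow> bool" where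
  "mv_isotone oplus neg zero d \<longleftrightarrow>
     (\<forall>x y. mv_le oplus neg zero x y \<longrightarrow> mv_le oplus neg zero (d x) (d y))"

end

theory Submission imports Defs begin

context mv_algebra begin
abbreviation one where "one \<equiv> neg zero"
abbreviation odot (infixl "\<odot>" 70) where "x \<odot> y \<equiv> neg (neg x \<oplus> neg y)"
abbreviation le where "le x y \<equiv> neg x \<oplus> y = one"

lemma comm_l: "x \<oplus> (y \<oplus> z) = y \<oplus> (x \<oplus> z)"
proof -
  have "x \<oplus> (y \<oplus> z) = (x \<oplus> y) \<oplus> z" by (rule assoc)
  also have "x \<oplus> y = y \<oplus> x" by (rule comm)
  also have "(y \<oplus> x) \<oplus> z = y \<oplus> (x \<oplus> z)" by (rule assoc[symmetric])
  finally show ?thesis .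
qed
lemma zero_l: "zero \<oplus> x = x" using comm[of zero x] zero_neutral[of x] by simp
lemma one_l: "one \<oplus> x = one" using comm[of "one" x] one_absorb[of x] by simp
lemma le_refl: "neg x \<oplus> x = one"
  using lukasiewicz[of x one] by (simp add: one_absorb neg_neg zero_l)
lemma sup_comm: "neg (neg x \<oplus> y) \<oplus> y = neg (neg y \<oplus> x) \<oplus> x" by (rule lukasiewicz)
lemma le_sup: "le x y \<Longrightarrow> neg (neg x \<oplus> y) \<oplus> y = y" by (simp add: neg_neg zero_l)
lemma le_antisym: "le x y \<Longrightarrow> le y x \<Longrightarrow> x = y"
proof -
  assume a: "le x y" "le y x"
  have "y = neg (neg x \<oplus> y) \<oplus> y" using le_sup[OF a(1)] by simp
  also have "\<dots> = neg (neg y \<oplus> x) \<oplus> x" by (rule sup_comm)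
  also have "\<dots> = x" using le_sup[OF a(2)] .
  finally show ?thesis by simp
qed
lemma le_iff: "le x y \<longleftrightarrow> (\<exists>p. y = x \<oplus> p)"
proof
  assume a: "le x y"
  have "y = neg (neg x \<oplus> y) \<oplus> y" using le_sup[OF a] by simp
  also have "\<dots> = neg (neg y \<oplus> x) \<oplus> x" by (rule sup_comm)
  also have "\<dots> = x \<oplus> neg (neg y \<oplus> x)" by (rule comm)
  finally show "\<exists>p. y = x \<oplus> p" by blast
next
  assume "\<exists>p. y = x \<oplus> p"
  then obtain p where p: "y = x \<oplus> p" by blast
  have "neg x \<oplus> (x \<oplus> p) = (neg x \<oplus> x) \<oplus> p" by (rule assoc)
  also have "\<dots> = one" by (simp only: le_refl one_l)
  finally show "le x y" using p by simp
qed
lemma le_trans: "le x y \<Longrightarrow> le y z \<Longrightarrow> le x z"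
proof -
  assume "le x y" "le y z"
  then obtain p q where "y = x \<oplus> p" "z = y \<oplus> q" using le_iff by blast
  hence "z = x \<oplus> (p \<oplus> q)" by (simp add: assoc)
  thus ?thesis using le_iff by blast
qed
lemma plus_mono: "le x y \<Longrightarrow> le (x \<oplus> z) (y \<oplus> z)"
proof -
  assume "le x y"
  then obtain p where "y = x \<oplus> p" using le_iff by blast
  hence "y \<oplus> z = (x \<oplus> z) \<oplus> p" by (simp only: assoc[symmetric] comm_l comm)
  thus ?thesis using le_iff by blast
qed
lemma le_plus: "le x (x \<oplus> y)" using le_iff by blast
lemma le_one: "le x one" by (simp add: one_absorb)
lemma le_zero: "le zero x" by (simp add: one_l)
lemma neg_anti: "le x y \<Longrightarrow> le (neg y) (neg x)" by (simp add: neg_neg comm)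
lemma odot_mono: "le x y \<Longrightarrow> le (x \<odot> z) (y \<odot> z)"
proof -
  assume "le x y"
  hence "le (neg y) (neg x)" by (rule neg_anti)
  hence "le (neg y \<oplus> neg z) (neg x \<oplus> neg z)" by (rule plus_mono)
  thus ?thesis by (rule neg_anti)
qed
lemma odot_comm: "x \<odot> y = y \<odot> x" by (simp add: comm)
lemma odot_assoc: "x \<odot> (y \<odot> z) = (x \<odot> y) \<odot> z" by (simp add: neg_neg assoc)
lemma odot_le: "le (x \<odot> y) x"
proof -
  have "(neg x \<oplus> neg y) \<oplus> x = neg y \<oplus> (neg x \<oplus> x)" by (simp only: assoc[symmetric] comm_l comm)
  also have "\<dots> = one" by (simp only: le_refl one_absorb)
  finally show ?thesis by (simp only: neg_neg)
qed
lemma odot_one: "x \<odot> one = x" by (simp add: neg_neg zero_neutral)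
lemma odot_zero: "x \<odot> zero = zero" by (simp add: one_absorb neg_neg)
lemma odot_neg: "x \<odot> neg x = zero" using le_refl[of x] comm[of "neg x" x] by (simp add: neg_neg)
lemma le_zero_eq: "le x zero \<Longrightarrow> x = zero" using le_antisym le_zero by blast
lemma le_sup1: "le y (neg (neg x \<oplus> y) \<oplus> y)" using le_plus[of y "neg (neg x \<oplus> y)"] comm[of y] by simp
lemma le_sup2: "le x (neg (neg x \<oplus> y) \<oplus> y)" using le_sup1[of x y] sup_comm[of x y] by simp
lemma le_odot_iff: "le x y \<longleftrightarrow> x \<odot> neg y = zero"
proof
  assume "le x y" thus "x \<odot> neg y = zero" by (simp add: neg_neg)
next
  assume "x \<odot> neg y = zero"
  hence "neg (neg (neg x \<oplus> y)) = neg zero" by (simp add: neg_neg)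
  thus "le x y" by (simp add: neg_neg)
qed
lemma inf_comm: "x \<odot> (neg x \<oplus> y) = y \<odot> (neg y \<oplus> x)"
  using lukasiewicz[of "neg x" "neg y"] by (simp add: neg_neg comm)
lemma plus_mono2: "le x y \<Longrightarrow> le (z \<oplus> x) (z \<oplus> y)"
proof -
  assume "le x y"
  then obtain p where "y = x \<oplus> p" using le_iff by blast
  hence "z \<oplus> y = (z \<oplus> x) \<oplus> p" by (simp add: assoc)
  thus ?thesis using le_iff by blast
qed
lemma bool_odot: assumes "a \<oplus> a = a" shows "a \<odot> a = a"
proof -
  have "a \<odot> (neg a \<oplus> neg a) = neg a \<odot> (a \<oplus> a)" using inf_comm[of a "neg a"] by (simp add: neg_neg)
  also have "\<dots> = zero" using assms odot_neg[of "neg a"] by (simp add: neg_neg)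
  finally have "a \<odot> neg (a \<odot> a) = zero" by (simp only: neg_neg)
  hence "le a (a \<odot> a)" using le_odot_iff by blast
  thus ?thesis using odot_le le_antisym by blast
qed
lemma bool_le: assumes "a \<oplus> a = a" "le z a" shows "z \<odot> a = z"
proof -
  have i: "z \<odot> (neg z \<oplus> a) = a \<odot> (neg a \<oplus> z)" by (rule inf_comm)
  have "z \<odot> (neg z \<oplus> a) = z" using assms(2) odot_one[of z] by simp
  hence eq: "a \<odot> (neg a \<oplus> z) = z" using i by simp
  have "z \<odot> a = a \<odot> z" by (rule odot_comm)
  also have "\<dots> = a \<odot> (a \<odot> (neg a \<oplus> z))" using eq by simp
  also have "\<dots> = (a \<odot> a) \<odot> (neg a \<oplus> z)" by (rule odot_assoc)
  also have "\<dots> = a \<odot> (neg a \<oplus> z)" using bool_odot[OF assms(1)] by simp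
  also have "\<dots> = z" by (rule eq)
  finally show ?thesis .
qed
lemma L: "le (u \<odot> (v \<oplus> w)) ((u \<odot> v) \<oplus> w)"
proof -
  have "le (neg v) (neg (v \<oplus> w) \<oplus> w)" using le_sup2[of "neg v" w] by (simp only: neg_neg)
  hence "le (neg u \<oplus> neg v) (neg u \<oplus> (neg (v \<oplus> w) \<oplus> w))" by (rule plus_mono2)
  hence "le ((neg u \<oplus> neg v) \<oplus> (u \<odot> v)) ((neg u \<oplus> (neg (v \<oplus> w) \<oplus> w)) \<oplus> (u \<odot> v))"
    by (rule plus_mono)
  moreover have "(neg u \<oplus> neg v) \<oplus> (u \<odot> v) = one" using le_refl[of "neg u \<oplus> neg v"] by (simp only: neg_neg comm)
  ultimately have "le one ((neg u \<oplus> (neg (v \<oplus> w) \<oplus> w)) \<oplus> (u \<odot> v))" by simp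
  hence e: "(neg u \<oplus> (neg (v \<oplus> w) \<oplus> w)) \<oplus> (u \<odot> v) = one" using le_one le_antisym by metis
  have "neg (u \<odot> (v \<oplus> w)) \<oplus> ((u \<odot> v) \<oplus> w) = (neg u \<oplus> (neg (v \<oplus> w) \<oplus> w)) \<oplus> (u \<odot> v)"
    by (simp only: neg_neg assoc[symmetric] comm comm_l)
  thus ?thesis using e by simp
qed

lemma sup_eq: "mv_sup (\<oplus>) neg x y = neg (neg x \<oplus> y) \<oplus> y"
  by (simp add: mv_sup_def mv_odot_def neg_neg)

context fixes d assumes D: "odot_sup_derivation (\<oplus>) neg d"
begin
lemma Dd: "d (x \<odot> y) = neg (neg (d x \<odot> y) \<oplus> (x \<odot> d y)) \<oplus> (x \<odot> d y)"
  using D unfolding odot_sup_derivation_def sup_eq by (simp add: mv_odot_def)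
lemma D0: "d zero = zero"
proof -
  have "d zero = d (zero \<odot> zero)" by (simp add: odot_zero)
  also have "\<dots> = zero" unfolding Dd by (simp add: odot_comm odot_zero neg_neg zero_neutral one_l)
  finally show ?thesis .
qed
lemma D1: "le (d x) x"
proof -
  have "zero = d (x \<odot> neg x)" using odot_neg D0 by simp
  hence "neg (neg (d x \<odot> neg x) \<oplus> (x \<odot> d (neg x))) \<oplus> (x \<odot> d (neg x)) = zero" using Dd by simp
  hence "d x \<odot> neg x = zero" by (metis le_sup2 le_zero_eq)
  thus ?thesis using le_odot_iff by blast
qed
lemma D2: "le (x \<odot> d one) (d x)"
proof -
  have "d x = d (x \<odot> one)" by (simp add: odot_one)
  also have "\<dots> = neg (neg (d x) \<oplus> (x \<odot> d one)) \<oplus> (x \<odot> d one)" using Dd[of x one] odot_one[of "d x"] by simp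
  finally show ?thesis by (metis le_sup1)
qed

definition "P \<longleftrightarrow> d one \<oplus> d one = d one \<and> (\<forall>x. d x = x \<odot> d one)"

lemma c1P: assumes "mv_isotone (\<oplus>) neg zero d" "d one \<oplus> d one = d one" shows P
  unfolding P_def
proof (intro conjI allI assms(2))
  fix x
  have "le (d x) (d one)" using assms(1) le_one unfolding mv_isotone_def mv_le_def by blast
  hence "d x = d x \<odot> d one" using bool_le assms(2) by simp
  hence "le (d x) (x \<odot> d one)" using odot_mono D1 by metis
  thus "d x = x \<odot> d one" using D2 le_antisym by blast
qed

lemma P2: assumes P shows "d (x \<oplus> y) = d x \<oplus> d y"
proof -
  let ?a = "d one"
  have b: "?a \<oplus> ?a = ?a" and dd: "\<And>x. d x = x \<odot> ?a" using assms unfolding P_def by blast+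
  have aa: "?a \<odot> ?a = ?a" using bool_odot b by blast
  have e: "((x \<oplus> y) \<odot> ?a) \<odot> ?a = (x \<oplus> y) \<odot> ?a" using aa odot_assoc[of "x \<oplus> y" ?a ?a] by simp
  have l1: "le ((x \<oplus> y) \<odot> ?a) ((x \<odot> ?a) \<oplus> y)" using L[of ?a x y] odot_comm[of ?a x] odot_comm[of ?a "x \<oplus> y"] by simp
  have l2: "le (((x \<oplus> y) \<odot> ?a) \<odot> ?a) (((x \<odot> ?a) \<oplus> y) \<odot> ?a)" using l1 by (rule odot_mono)
  have c1: "y \<oplus> (x \<odot> ?a) = (x \<odot> ?a) \<oplus> y" by (rule comm)
  have c2: "(y \<odot> ?a) \<oplus> (x \<odot> ?a) = (x \<odot> ?a) \<oplus> (y \<odot> ?a)" by (rule comm)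
  have l3: "le (((x \<odot> ?a) \<oplus> y) \<odot> ?a) ((x \<odot> ?a) \<oplus> (y \<odot> ?a))"
    using L[of ?a y "x \<odot> ?a"] odot_comm[of ?a y] odot_comm[of ?a "y \<oplus> (x \<odot> ?a)"] c1 c2 by simp
  have le1: "le ((x \<oplus> y) \<odot> ?a) ((x \<odot> ?a) \<oplus> (y \<odot> ?a))" using le_trans[OF l2 l3] e by simp
  let ?z = "(x \<odot> ?a) \<oplus> (y \<odot> ?a)"
  have m1: "le ?z (?a \<oplus> (y \<odot> ?a))" using plus_mono[OF odot_le[of ?a x]] odot_comm[of ?a x] by simp
  have c3: "(y \<odot> ?a) \<oplus> ?a = ?a \<oplus> (y \<odot> ?a)" by (rule comm)
  have m2: "le (?a \<oplus> (y \<odot> ?a)) (?a \<oplus> ?a)" using plus_mono[OF odot_le[of ?a y], of ?a] odot_comm[of ?a y] c3 by simp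
  have "le ?z (?a \<oplus> ?a)" using m1 m2 by (rule le_trans)
  hence ez: "?z \<odot> ?a = ?z" using b bool_le by simp
  have n1: "le ?z (x \<oplus> (y \<odot> ?a))" using plus_mono[OF odot_le[of x ?a]] by simp
  have c4: "(y \<odot> ?a) \<oplus> x = x \<oplus> (y \<odot> ?a)" by (rule comm)
  have c5: "y \<oplus> x = x \<oplus> y" by (rule comm)
  have n2: "le (x \<oplus> (y \<odot> ?a)) (x \<oplus> y)" using plus_mono[OF odot_le[of y ?a], of x] c4 c5 by simp
  have "le ?z (x \<oplus> y)" using n1 n2 by (rule le_trans)
  hence "le (?z \<odot> ?a) ((x \<oplus> y) \<odot> ?a)" by (rule odot_mono)
  hence "le ?z ((x \<oplus> y) \<odot> ?a)" using ez by simp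
  hence "(x \<oplus> y) \<odot> ?a = ?z" using le1 le_antisym by blast
  thus ?thesis using dd[of "x \<oplus> y"] dd[of x] dd[of y] by simp
qed

lemma P3: assumes P shows "d (x \<odot> y) = d x \<odot> d y"
proof -
  let ?a = "d one"
  have b: "?a \<oplus> ?a = ?a" and dd: "\<And>x. d x = x \<odot> ?a" using assms unfolding P_def by blast+
  have aa: "?a \<odot> ?a = ?a" using bool_odot b by blast
  have "x \<odot> ?a \<odot> (y \<odot> ?a) = x \<odot> (?a \<odot> (y \<odot> ?a))" by (rule odot_assoc[symmetric])
  also have "?a \<odot> (y \<odot> ?a) = (y \<odot> ?a) \<odot> ?a" by (rule odot_comm)
  also have "(y \<odot> ?a) \<odot> ?a = y \<odot> (?a \<odot> ?a)" by (rule odot_assoc[symmetric])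
  also have "x \<odot> (y \<odot> (?a \<odot> ?a)) = x \<odot> y \<odot> (?a \<odot> ?a)" by (rule odot_assoc)
  also have "\<dots> = x \<odot> y \<odot> ?a" by (simp only: aa)
  also have "\<dots> = d (x \<odot> y)" by (rule dd[symmetric])
  finally have "x \<odot> ?a \<odot> (y \<odot> ?a) = d (x \<odot> y)" .
  thus ?thesis by (simp only: dd[of x] dd[of y])
qed

lemma c21: assumes "\<forall>x y. d (x \<oplus> y) = d x \<oplus> d y"
  shows "mv_isotone (\<oplus>) neg zero d" "d one \<oplus> d one = d one"
proof -
  have "one \<oplus> one = one" by (rule one_absorb)
  thus "d one \<oplus> d one = d one" using assms[rule_format, of one one] by metis
  show "mv_isotone (\<oplus>) neg zero d" unfolding mv_isotone_def mv_le_def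
  proof (intro allI impI)
    fix x y assume "le x y"
    then obtain p where "y = x \<oplus> p" using le_iff by blast
    hence "d y = d x \<oplus> d p" using assms by simp
    thus "le (d x) (d y)" using le_plus by simp
  qed
qed

lemma c31: assumes "\<forall>x y. d (x \<odot> y) = d x \<odot> d y"
  shows "mv_isotone (\<oplus>) neg zero d" "d one \<oplus> d one = d one"
proof -
  have "one \<odot> one = one" by (rule odot_one)
  hence "d one = d one \<odot> d one" using assms[rule_format, of one one] by metis
  hence "neg (d one) \<oplus> neg (d one) = neg (d one)" by (metis neg_neg)
  hence "neg (d one) \<odot> neg (d one) = neg (d one)" by (rule bool_odot)
  thus "d one \<oplus> d one = d one" by (metis neg_neg)
  show "mv_isotone (\<oplus>) neg zero d" unfolding mv_isotone_def mv_le_def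
  proof (intro allI impI)
    fix x y assume "le x y"
    hence "x \<odot> (neg x \<oplus> y) = x" using odot_one[of x] by simp
    hence eq: "x = y \<odot> (neg y \<oplus> x)" using inf_comm[of x y] by simp
    have "d x = d (y \<odot> (neg y \<oplus> x))" using eq by (rule arg_cong)
    also have "\<dots> = d y \<odot> d (neg y \<oplus> x)" using assms by blast
    finally have "d x = d y \<odot> d (neg y \<oplus> x)" .
    thus "le (d x) (d y)" using odot_le[of "d y" "d (neg y \<oplus> x)"] by simp
  qed
qed
end
end


theorem proposition3p22:
  fixes oplus :: "'a \<Rightarrow> 'a \<Rightarrow> 'a" and neg :: "'a \<Rightarrow> 'a" and zero :: 'a
    and d :: "'a \<Rightarrow> 'a"
  assumes "mv_algebra oplus neg zero"
    and "odot_sup_derivation oplus neg d"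
  shows "((mv_isotone oplus neg zero d \<and> d (mv_one neg zero) \<in> boolean_center oplus)
            \<longleftrightarrow> (\<forall>x y. d (oplus x y) = oplus (d x) (d y)))
       \<and> ((\<forall>x y. d (oplus x y) = oplus (d x) (d y))
            \<longleftrightarrow> (\<forall>x y. d (mv_odot oplus neg x y) = mv_odot oplus neg (d x) (d y)))"
proof -
  interpret mv_algebra oplus neg zero by fact
  note D = assms(2)
  have o: "\<And>x y. mv_odot oplus neg x y = neg (oplus (neg x) (neg y))" by (simp add: mv_odot_def)
  have bc: "d (mv_one neg zero) \<in> boolean_center oplus \<longleftrightarrow> oplus (d (neg zero)) (d (neg zero)) = d (neg zero)"
    by (simp add: mv_one_def boolean_center_def)
  show ?thesis unfolding o bc
    using c1P[OF D] P2[OF D] P3[OF D] c21[OF D] c31[OF D] by blast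
qed
end
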